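(* Let $x_1>\cdots>x_N$ be real, $\mathbf y\in\mathbb R^N$, and $\mathbf A\in\{-1,1\}^{N\times N}$ with $\mathbf A_{i,n}=\mathrm{sign}(x_i-x_n)$. Then for every $\beta\ge0$ the problem $\min_{\mathbf z\in\mathbb R^N}\frac12\|\mathbf A\mathbf z-\mathbf y\|_2^2+\beta\|\mathbf z\|_1$ has a unique solution, and the solution of the minimum-norm problem $\min_{\mathbf z}\|\mathbf z\|_1$ subject to $\mathbf A\mathbf z=\mathbf y$ is $\mathbf z^*=\mathbf A^{-1}\mathbf y$.
   Context: $\mathrm{sign}(x)=1$ if $x\ge0$ and $-1$ if $x<0$. (This $\mathbf A$ is the dictionary of a two-layer sign-activated network on one-dimensional data; it is upper triangular-type: entries $1$ on and above the diagonal, $-1$ below.) *)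

theory Defs
  imports "HOL-Analysis.Analysis"
begin

text \<open>sign(x) = 1 if x >= 0 and -1 if x < 0 (paper's convention).\<close>
definition sign :: "real \<Rightarrow> real" where
  "sign t = (if t \<ge> 0 then 1 else -1)"

definition sign_dict :: "real ^ 'n \<Rightarrow> real ^ 'n ^ 'n" where
  "sign_dict x = (\<chi> i n. sign (x $ i - x $ n))"

definition l1norm :: "real ^ 'n \<Rightarrow> real" where
  "l1norm z = (\<Sum>i\<in>UNIV. \<bar>z $ i\<bar>)"

end

theory Submission
  imports Defs
begin

lemma entry:
  fixes x :: "real ^ 'n::{finite, linorder}"
  assumes decr: "\<forall>i j. i < j \<longrightarrow> x $ i > x $ j"
  shows "sign_dict x $ i $ n = (if i \<le> n then 1 else -1)"
proof -
  have "i < n \<Longrightarrow> x $ i > x $ n" "n < i \<Longrightarrow> x $ n > x $ i" using decr by auto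
  then show ?thesis unfolding sign_dict_def sign_def
    by (cases rule: linorder_cases[of i n]) auto
qed

lemma ker:
  fixes x z :: "real ^ 'n::{finite, linorder}"
  assumes decr: "\<forall>i j. i < j \<longrightarrow> x $ i > x $ j"
    and Az: "sign_dict x *v z = 0"
  shows "z = 0"
proof -
  define S where "S = (\<Sum>n\<in>UNIV. z $ n)"
  define P where "P i = (\<Sum>n\<in>{n. n < i}. z $ n)" for i
  have row: "S - 2 * P i = 0" for i
  proof -
    have "(sign_dict x *v z) $ i = 0" using Az by simp
    hence "(\<Sum>n\<in>UNIV. (if i \<le> n then 1 else -1) * z $ n) = 0"
      by (simp add: matrix_vector_mult_def entry[OF decr])
    moreover have "(\<Sum>n\<in>UNIV. (if i \<le> n then 1 else -1) * z $ n)
        = (\<Sum>n\<in>UNIV. z $ n) - 2 * (\<Sum>n\<in>UNIV. if n < i then z $ n else 0)"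
    proof -
      have e: "(if i \<le> n then 1 else -1) * z $ n = z $ n - 2 * (if n < i then z $ n else 0)" for n
      proof (cases "i \<le> n")
        case True
        hence "\<not> n < i" by (simp add: not_less)
        with True show ?thesis by simp
      next
        case False
        hence "n < i" by (simp add: not_le)
        with False show ?thesis by simp
      qed
      show ?thesis unfolding sum_distrib_left sum_subtractf[symmetric] e ..
    qed
    moreover have "(\<Sum>n\<in>UNIV. if n < i then z $ n else 0) = P i"
      unfolding P_def by (simp add: sum.If_cases)
    ultimately show ?thesis unfolding S_def by simp
  qed
  define i0 where "i0 = Min (UNIV :: 'n set)"
  have "i0 \<le> n" for n unfolding i0_def by (rule Min_le) auto
  hence "{n. n < i0} = {}" using leD by blast
  hence "P i0 = 0" unfolding P_def by simp
  hence S0: "S = 0" using row[of i0] by simp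
  hence P0: "P i = 0" for i using row[of i] by simp
  have "z $ i = 0" for i
  proof (cases "\<exists>j. i < j")
    case True
    define j where "j = Min {n. i < n}"
    have ne: "{n. i < n} \<noteq> {}" using True by blast
    have "j \<in> {n. i < n}" unfolding j_def by (rule Min_in[OF finite ne])
    hence jin: "i < j" by simp
    have jmin: "j \<le> n" if "i < n" for n unfolding j_def by (rule Min_le) (use that in simp_all)
    have iff: "n < j \<longleftrightarrow> n \<le> i" for n
    proof
      assume "n < j"
      show "n \<le> i"
      proof (rule ccontr)
        assume "\<not> n \<le> i"
        hence "i < n" by (simp add: not_le)
        hence "j \<le> n" by (rule jmin)
        with \<open>n < j\<close> show False by simp
      qed
    next
      assume "n \<le> i"
      from this jin show "n < j" by (rule le_less_trans)
    qed
    have "{n. n < j} = insert i {n. n < i}"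
      unfolding iff by auto
    hence "P j = z $ i + P i" unfolding P_def by simp
    then show ?thesis using P0 by simp
  next
    case False
    hence "n \<le> i" for n by (simp add: not_less[symmetric])
    hence "(UNIV :: 'n set) = insert i {n. n < i}" by (auto simp: order.strict_iff_order)
    hence "S = (\<Sum>n\<in>insert i {n. n < i}. z $ n)" unfolding S_def by (rule arg_cong)
    also have "\<dots> = z $ i + P i" unfolding P_def by (subst sum.insert) auto
    finally have "S = z $ i + P i" .
    then show ?thesis using P0 S0 by simp
  qed
  then show ?thesis by (simp add: vec_eq_iff)
qed

lemma cont_mv: "continuous_on S (\<lambda>z. (A::real^'n^'m) *v z)"
  by (intro linear_continuous_on linear_conv_bounded_linear[THEN iffD1] matrix_vector_mul_linear)

lemma cont_f:
  "continuous_on S (\<lambda>z. (1/2) * (norm ((A::real^'n^'m) *v z - y))\<^sup>2 + \<beta> * l1norm (z::real^'n))"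
  unfolding l1norm_def by (intro continuous_intros cont_mv)

lemma l1_nonneg: "l1norm z \<ge> 0" unfolding l1norm_def by (simp add: sum_nonneg)

lemma l1_mid: "l1norm ((1/2) *\<^sub>R (z1 + z2)) \<le> (l1norm z1 + l1norm z2) / 2"
proof -
  have "l1norm ((1/2) *\<^sub>R (z1 + z2)) \<le> (\<Sum>i\<in>UNIV. (\<bar>z1 $ i\<bar> + \<bar>z2 $ i\<bar>) / 2)"
    unfolding l1norm_def by (rule sum_mono) (simp add: abs_triangle_ineq)
  also have "\<dots> = (l1norm z1 + l1norm z2) / 2"
    unfolding l1norm_def by (simp add: sum_divide_distrib[symmetric] sum.distrib)
  finally show ?thesis .
qed

lemma parallelogram:
  fixes a b :: "'a::real_inner"
  shows "(norm ((1/2) *\<^sub>R (a + b)))\<^sup>2 = ((norm a)\<^sup>2 + (norm b)\<^sup>2) / 2 - (norm (a - b))\<^sup>2 / 4"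
  unfolding power2_norm_eq_inner by (simp add: inner_simps inner_commute field_simps)

lemma lasso_unique:
  fixes A :: "real^'n^'n" and y :: "real^'n"
  assumes inj: "\<And>v. A *v v = 0 \<Longrightarrow> v = 0" and B: "B ** A = mat 1" and beta: "\<beta> \<ge> 0"
  shows "\<exists>!z. \<forall>w. (1/2) * (norm (A *v z - y))\<^sup>2 + \<beta> * l1norm z
                      \<le> (1/2) * (norm (A *v w - y))\<^sup>2 + \<beta> * l1norm w"
proof -
  define f where "f z = (1/2) * (norm (A *v z - y))\<^sup>2 + \<beta> * l1norm z" for z
  have cf: "continuous_on S f" for S unfolding f_def by (rule cont_f)
  define K where "K = {z. f z \<le> f 0}"
  define r where "r = sqrt (2 * f 0)"
  have Ksub: "K \<subseteq> (\<lambda>v. B *v v) ` cball y r"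
  proof
    fix z assume "z \<in> K"
    hence "(1/2) * (norm (A *v z - y))\<^sup>2 \<le> f 0"
    proof -
      have "f z \<le> f 0" using \<open>z \<in> K\<close> unfolding K_def by simp
      moreover have "\<beta> * l1norm z \<ge> 0" using beta l1_nonneg[of z] by simp
      ultimately show ?thesis unfolding f_def by linarith
    qed
    hence "(norm (A *v z - y))\<^sup>2 \<le> 2 * f 0" by simp
    hence "norm (A *v z - y) \<le> r" unfolding r_def by (simp add: real_le_rsqrt)
    hence "A *v z \<in> cball y r" by (simp add: dist_norm norm_minus_commute)
    moreover have "z = B *v (A *v z)" by (simp add: matrix_vector_mul_assoc B)
    ultimately show "z \<in> (\<lambda>v. B *v v) ` cball y r" by blast
  qed
  have "compact ((\<lambda>v. B *v v) ` cball y r)"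
    by (intro compact_continuous_image cont_mv compact_cball)
  hence "bounded K" using Ksub bounded_subset compact_imp_bounded by blast
  moreover have "closed K" unfolding K_def
    by (intro closed_Collect_le cf continuous_on_const)
  ultimately have "compact K" by (simp add: compact_eq_bounded_closed)
  moreover have "0 \<in> K" unfolding K_def by simp
  ultimately have "\<exists>z0\<in>K. \<forall>w\<in>K. f z0 \<le> f w"
    using continuous_attains_inf[OF _ _ cf] by (metis empty_iff)
  then obtain z0 where z0: "z0 \<in> K" "\<And>w. w \<in> K \<Longrightarrow> f z0 \<le> f w"
    by blast
  have ex: "\<forall>w. f z0 \<le> f w"
  proof
    fix w show "f z0 \<le> f w"
    proof (cases "w \<in> K")
      case True then show ?thesis using z0 by blast
    next
      case False then show ?thesis using z0(2)[OF \<open>0 \<in> K\<close>] unfolding K_def by simp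
    qed
  qed
  have uniq: "z1 = z2" if h1: "\<forall>w. f z1 \<le> f w" and h2: "\<forall>w. f z2 \<le> f w" for z1 z2
  proof (rule ccontr)
    assume ne: "z1 \<noteq> z2"
    define m where "m = (1/2) *\<^sub>R (z1 + z2)"
    define a where "a = A *v z1 - y"
    define b where "b = A *v z2 - y"
    have "a - b = A *v (z1 - z2)" unfolding a_def b_def by (simp add: algebra_simps)
    hence "a - b \<noteq> 0" using inj ne by force
    hence pos: "(norm (a - b))\<^sup>2 > 0" by simp
    have y2: "(1/2) *\<^sub>R (y * 2) = y" by (simp add: vec_eq_iff)
    have "A *v m - y = (1/2) *\<^sub>R (a + b)" unfolding m_def a_def b_def
      by (simp add: algebra_simps y2)
    hence "(norm (A *v m - y))\<^sup>2 = ((norm a)\<^sup>2 + (norm b)\<^sup>2) / 2 - (norm (a - b))\<^sup>2 / 4"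
      using parallelogram[of a b] by (simp only:)
    hence "(norm (A *v m - y))\<^sup>2 < ((norm a)\<^sup>2 + (norm b)\<^sup>2) / 2"
      using pos by linarith
    moreover have "\<beta> * l1norm m \<le> \<beta> * ((l1norm z1 + l1norm z2) / 2)"
      unfolding m_def using beta l1_mid by (rule mult_left_mono[rotated])
    ultimately have "f m < (f z1 + f z2) / 2" unfolding f_def a_def b_def by (simp add: field_simps)
    moreover have "f z1 = f z2" using h1 h2 by (simp add: order_antisym)
    moreover have "f z1 \<le> f m" using h1 by blast
    ultimately show False by (simp add: field_simps)
  qed
  have "\<exists>!z. \<forall>w. f z \<le> f w"
  proof (rule ex1I)
    show "\<forall>w. f z0 \<le> f w" by (rule ex)
  next
    fix z assume "\<forall>w. f z \<le> f w"
    then show "z = z0" using uniq[OF _ ex] by blast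
  qed
  then show ?thesis unfolding f_def .
qed


theorem proposition5:
  fixes x y :: "real ^ 'n::{finite, linorder}"
  assumes decr: "\<forall>i j. i < j \<longrightarrow> x $ i > x $ j"
  shows "(\<forall>\<beta>::real. \<beta> \<ge> 0 \<longrightarrow>
            (\<exists>!z. \<forall>w. (1/2) * (norm (sign_dict x *v z - y))\<^sup>2 + \<beta> * l1norm z
                      \<le> (1/2) * (norm (sign_dict x *v w - y))\<^sup>2 + \<beta> * l1norm w))
       \<and> invertible (sign_dict x)
       \<and> (\<forall>z. (sign_dict x *v z = y \<and> (\<forall>w. sign_dict x *v w = y \<longrightarrow> l1norm z \<le> l1norm w))
                \<longleftrightarrow> z = matrix_inv (sign_dict x) *v y)"
proof -
  let ?A = "sign_dict x"
  have inj: "\<And>v. ?A *v v = 0 \<Longrightarrow> v = 0" using ker[OF decr] by blast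
  have inv: "invertible ?A"
    unfolding invertible_left_inverse matrix_left_invertible_ker using inj by blast
  have both: "?A ** matrix_inv ?A = mat 1 \<and> matrix_inv ?A ** ?A = mat 1"
    using inv unfolding invertible_def matrix_inv_def by (rule someI_ex)
  have sol: "?A *v (matrix_inv ?A *v y) = y"
    using both by (simp add: matrix_vector_mul_assoc)
  have un: "?A *v w = y \<Longrightarrow> w = matrix_inv ?A *v y" for w
    using both by (metis matrix_vector_mul_assoc matrix_vector_mul_lid)
  have P1: "\<forall>\<beta>::real. \<beta> \<ge> 0 \<longrightarrow>
            (\<exists>!z. \<forall>w. (1/2) * (norm (?A *v z - y))\<^sup>2 + \<beta> * l1norm z
                      \<le> (1/2) * (norm (?A *v w - y))\<^sup>2 + \<beta> * l1norm w)"
    using lasso_unique[OF inj] both by blast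
  have P3: "\<forall>z. (?A *v z = y \<and> (\<forall>w. ?A *v w = y \<longrightarrow> l1norm z \<le> l1norm w))
                \<longleftrightarrow> z = matrix_inv ?A *v y"
  proof (intro allI iffI)
    fix z assume "?A *v z = y \<and> (\<forall>w. ?A *v w = y \<longrightarrow> l1norm z \<le> l1norm w)"
    then show "z = matrix_inv ?A *v y" using un by blast
  next
    fix z assume z: "z = matrix_inv ?A *v y"
    have Az: "?A *v z = y" unfolding z by (rule sol)
    have "\<forall>w. ?A *v w = y \<longrightarrow> l1norm z \<le> l1norm w"
    proof (intro allI impI)
      fix w assume "?A *v w = y"
      hence "w = z" using un z by blast
      then show "l1norm z \<le> l1norm w" by simp
    qed
    with Az show "?A *v z = y \<and> (\<forall>w. ?A *v w = y \<longrightarrow> l1norm z \<le> l1norm w)" by blast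
  qed
  show ?thesis by (intro conjI P1 inv P3)
qed

end
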